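(* Let $(P_1,\dots,P_J)$ be a stochastic demand system with vector representation $\pi\in\mathbf{R}^{\sum_j I_j}$, and let $A$ be the rational demand matrix, with $H$ columns. Then $(P_1,\dots,P_J)$ is stochastically rationalizable if and only if $\pi=A\nu$ for some $\nu$ in the unit simplex $\Delta^{H-1}=\{\nu\in\mathbf{R}^H:\nu\ge 0,\ \mathbf{1}_H'\nu=1\}$. Furthermore, this holds if and only if $\pi=A\nu$ for some $\nu\in\mathbf{R}^H$ with $\nu\ge 0$.
   Context: Fix integers $K\ge 1$ and $J\ge1$, price vectors $p_1,\dots,p_J\in\mathbf{R}^K_{++}$, and budget planes $\mathcal{B}_j=\{y\in\mathbf{R}^K_+:p_j'y=1\}$. A point $x$ is on, strictly above, or strictly below $\mathcal{B}_j$ according as $p_j'x=1$, $>1$, $<1$. A demand vector $d=(d_1,\dots,d_J)\in\mathcal{B}_1\times\cdots\times\mathcal{B}_J$ is rationalizable if there is a strictly increasing $u:\mathbf{R}^K_+\to\mathbf{R}$ with $d_j\in\arg\max_{x\in\mathcal{B}_j}u(x)$ for all $j$. A stochastic demand system is $(P_1,\dots,P_J)$ with $P_j$ a probability distribution on $\mathcal{B}_j$; it is stochastically rationalizable if some probability distribution on $\mathcal{B}_1\times\cdots\times\mathcal{B}_J$ concentrated on rationalizable demand vectors has $j$-th marginal $P_j$ for all $j$. Patches: the coarsest partition of $\bigcup_j\mathcal{B}_j$ such that each $\mathcal{B}_j$ is a union of cells and each cell is, for every $j$, entirely on, entirely strictly above, or entirely strictly below $\mathcal{B}_j$ (equivalently,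 cells are the nonempty sets of points with a common sign vector $(\mathrm{sign}(p_j'x-1))_j$). For each patch $x$ fix a representative $y^*(x)\in x$. For each $j$ list the patches contained in $\mathcal{B}_j$ (in an arbitrary fixed order) as $x_{1|j},\dots,x_{I_j|j}$; a patch lying on several budget planes appears in several lists. The vector representation of $(P_1,\dots,P_J)$ is the vector $\pi$ of length $\sum_j I_j$ consisting of $J$ consecutive blocks, the $j$-th block being $(P_j(x_{1|j}),\dots,P_j(x_{I_j|j}))$. The rational demand matrix $A$ is the matrix whose columns are exactly (each once, in some order) the binary vectors $a$ of length $\sum_j I_j$ that have exactly one entry equal to $1$ in each block, say at position $i_j$ in block $j$, and for which the demand vector $(y^*(x_{i_1|1}),\dots,y^*(x_{i_J|J}))$ is rationalizable; $H$ denotes its number of columns. *)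

theory Defs
  imports "HOL-Probability.Probability"
begin

text \<open>Goods are indexed by a finite type 'k (so K = CARD('k) \<ge> 1), budgets by a
finite type 'j (so J = CARD('j) \<ge> 1). Prices: p :: 'j \<Rightarrow> real^'k.\<close>

definition nonneg_orthant :: "(real^'k) set" where
  "nonneg_orthant = {y. \<forall>i. 0 \<le> y $ i}"

definition budget :: "('j \<Rightarrow> real^'k) \<Rightarrow> 'j \<Rightarrow> (real^'k) set" where
  "budget p j = {y \<in> nonneg_orthant. p j \<bullet> y = 1}"

definition strictly_increasing :: "(real^'k \<Rightarrow> real) \<Rightarrow> bool" where
  "strictly_increasing u \<longleftrightarrow>
     (\<forall>x y. x \<in> nonneg_orthant \<and> y \<in> nonneg_orthant \<and> (\<forall>i. x $ i \<le> y $ i) \<and> x \<noteq> y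
        \<longrightarrow> u x < u y)"

definition rationalizable :: "('j \<Rightarrow> real^'k) \<Rightarrow> ('j \<Rightarrow> real^'k) \<Rightarrow> bool" where
  "rationalizable p d \<longleftrightarrow>
     (\<forall>j. d j \<in> budget p j) \<and>
     (\<exists>u. strictly_increasing u \<and> (\<forall>j. \<forall>x\<in>budget p j. u x \<le> u (d j)))"

definition budget_union :: "('j \<Rightarrow> real^'k) \<Rightarrow> (real^'k) set" where
  "budget_union p = (\<Union>j. budget p j)"

definition sign_vector :: "('j \<Rightarrow> real^'k) \<Rightarrow> real^'k \<Rightarrow> 'j \<Rightarrow> real" where
  "sign_vector p x = (\<lambda>j. sgn (p j \<bullet> x - 1))"

definition patches :: "('j \<Rightarrow> real^'k) \<Rightarrow> (real^'k) set set" where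
  "patches p = {{y \<in> budget_union p. sign_vector p y = sign_vector p x} | x. x \<in> budget_union p}"

text \<open>Row index set of the vector representation: pairs (j, x) with x a patch contained
in budget plane j (block j lists the patches in budget j; ordering is immaterial, so
vectors in R^(sum_j I_j) are represented as real functions on this finite index set,
zero outside).\<close>
definition rows :: "('j \<Rightarrow> real^'k) \<Rightarrow> ('j \<times> (real^'k) set) set" where
  "rows p = {(j, x). x \<in> patches p \<and> x \<subseteq> budget p j}"

definition stochastic_demand_system ::
  "('j \<Rightarrow> real^'k) \<Rightarrow> ('j \<Rightarrow> (real^'k) measure) \<Rightarrow> bool" where
  "stochastic_demand_system p P \<longleftrightarrow>
     (\<forall>j. prob_space (P j) \<and> sets (P j) = sets borel \<and> emeasure (P j) (budget p j) = 1)"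

definition stochastically_rationalizable ::
  "('j \<Rightarrow> real^'k) \<Rightarrow> ('j \<Rightarrow> (real^'k) measure) \<Rightarrow> bool" where
  "stochastically_rationalizable p P \<longleftrightarrow>
     (\<exists>Q :: ('j \<Rightarrow> real^'k) measure.
        prob_space Q \<and> sets Q = sets (PiM UNIV (\<lambda>_. borel)) \<and>
        (AE d in Q. rationalizable p d) \<and>
        (\<forall>j. distr Q borel (\<lambda>d. d j) = P j))"

definition vector_rep ::
  "('j \<Rightarrow> real^'k) \<Rightarrow> ('j \<Rightarrow> (real^'k) measure) \<Rightarrow> ('j \<times> (real^'k) set) \<Rightarrow> real" where
  "vector_rep p P = (\<lambda>(j, x). if (j, x) \<in> rows p then measure (P j) x else 0)"

text \<open>Columns of the rational demand matrix: binary vectors (indexed by rows, zero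
outside) with exactly one entry 1 in each block, such that the demand vector of the
representatives of the selected patches is rationalizable.\<close>
definition selected_patch ::
  "('j \<Rightarrow> real^'k) \<Rightarrow> ('j \<times> (real^'k) set \<Rightarrow> real) \<Rightarrow> 'j \<Rightarrow> (real^'k) set" where
  "selected_patch p a j = (THE x. (j, x) \<in> rows p \<and> a (j, x) = 1)"

definition rational_demand_columns ::
  "('j \<Rightarrow> real^'k) \<Rightarrow> ((real^'k) set \<Rightarrow> real^'k) \<Rightarrow> ('j \<times> (real^'k) set \<Rightarrow> real) set" where
  "rational_demand_columns p ystar =
     {a. (\<forall>r. a r \<in> {0, 1}) \<and> (\<forall>r. r \<notin> rows p \<longrightarrow> a r = 0) \<and>
         (\<forall>j. \<exists>!x. (j, x) \<in> rows p \<and> a (j, x) = 1) \<and>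
         rationalizable p (\<lambda>j. ystar (selected_patch p a j))}"

definition mat_vec ::
  "('j \<Rightarrow> real^'k) \<Rightarrow> ((real^'k) set \<Rightarrow> real^'k) \<Rightarrow>
   (('j \<times> (real^'k) set \<Rightarrow> real) \<Rightarrow> real) \<Rightarrow> ('j \<times> (real^'k) set) \<Rightarrow> real" where
  "mat_vec p ystar \<nu> = (\<lambda>r. \<Sum>a\<in>rational_demand_columns p ystar. a r * \<nu> a)"

end

theory Submission
  imports Defs
begin


definition pat :: "('j \<Rightarrow> real^'k) \<Rightarrow> real^'k \<Rightarrow> (real^'k) set" where
  "pat p y = {z \<in> budget_union p. sign_vector p z = sign_vector p y}"

lemma patches_pat: "patches p = pat p ` budget_union p"
  unfolding patches_def pat_def by auto

lemma pat_self: "y \<in> budget_union p \<Longrightarrow> y \<in> pat p y"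
  unfolding pat_def by auto

lemma patch_eq: "x \<in> patches p \<Longrightarrow> y \<in> x \<Longrightarrow> x = pat p y"
  unfolding patches_pat pat_def by auto

lemma patch_sv: "x \<in> patches p \<Longrightarrow> y \<in> x \<Longrightarrow> z \<in> budget_union p \<Longrightarrow> sign_vector p y = sign_vector p z \<Longrightarrow> z \<in> x"
  unfolding patches_pat pat_def by auto

lemma patch_sv2: "x \<in> patches p \<Longrightarrow> y \<in> x \<Longrightarrow> z \<in> x \<Longrightarrow> sign_vector p z = sign_vector p y"
  unfolding patches_pat pat_def by auto

lemma patch_sub_union: "x \<in> patches p \<Longrightarrow> x \<subseteq> budget_union p"
  unfolding patches_pat pat_def by auto

lemma pat_patch: "y \<in> budget_union p \<Longrightarrow> pat p y \<in> patches p"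
  unfolding patches_pat by auto

lemma patch_disj: "x \<in> patches p \<Longrightarrow> x' \<in> patches p \<Longrightarrow> y \<in> x \<Longrightarrow> y \<in> x' \<Longrightarrow> x = x'"
  using patch_eq by metis

lemma budget_sv: "y \<in> budget_union p \<Longrightarrow> (y \<in> budget p j) = (sign_vector p y j = 0)"
  unfolding budget_union_def budget_def sign_vector_def by (auto simp: sgn_eq_0_iff)

lemma patch_budget: "x \<in> patches p \<Longrightarrow> y \<in> x \<Longrightarrow> y \<in> budget p j \<Longrightarrow> x \<subseteq> budget p j"
proof
  fix z assume x: "x \<in> patches p" and y: "y \<in> x" "y \<in> budget p j" and z: "z \<in> x"
  have "sign_vector p z = sign_vector p y" using patch_sv2[OF x y(1) z] .
  moreover have "z \<in> budget_union p" "y \<in> budget_union p" using patch_sub_union[OF x] y z by auto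
  ultimately show "z \<in> budget p j" using budget_sv[of z p j] budget_sv[of y p j] y(2) by simp
qed

lemma sv_range: "sign_vector p y \<in> PiE UNIV (\<lambda>_. {-1,0,1::real})"
  unfolding sign_vector_def by (auto simp: sgn_if split: if_splits)

lemma finite_patches: "finite (patches (p::'j::finite \<Rightarrow> real^'k))"
proof -
  have sub: "patches p \<subseteq> (\<lambda>s. {z \<in> budget_union p. sign_vector p z = s}) ` (PiE UNIV (\<lambda>_. {-1,0,1::real}))"
  proof
    fix x assume "x \<in> patches p"
    then obtain y where "x = {z \<in> budget_union p. sign_vector p z = sign_vector p y}"
      unfolding patches_def by blast
    then show "x \<in> (\<lambda>s. {z \<in> budget_union p. sign_vector p z = s}) ` (PiE UNIV (\<lambda>_. {-1,0,1::real}))"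
      using sv_range[of p y] by (rule image_eqI)
  qed
  have fin: "finite (PiE (UNIV::'j set) (\<lambda>_. {-1,0,1::real}))" by (rule finite_PiE) auto
  show ?thesis by (rule finite_subset[OF sub finite_imageI[OF fin]])
qed

lemma finite_rows: "finite (rows (p::'j::finite \<Rightarrow> real^'k))"
proof -
  have "rows p \<subseteq> UNIV \<times> patches p" unfolding rows_def by auto
  thus ?thesis by (rule finite_subset) (simp add: finite_patches)
qed

lemma rows_pat: "y \<in> budget p j \<Longrightarrow> (j, pat p y) \<in> rows p"
  unfolding rows_def using pat_patch patch_budget pat_self
  by (metis (no_types, lifting) UN_I budget_union_def case_prodI iso_tuple_UNIV_I mem_Collect_eq)

lemma inner_pos:
  fixes q y :: "real^'k::finite"
  assumes "\<And>i. q $ i > 0" "\<forall>i. 0 \<le> y $ i" "y \<noteq> 0"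
  shows "q \<bullet> y > 0"
proof -
  obtain i where i: "y $ i \<noteq> 0" using assms(3) by (auto simp: vec_eq_iff)
  have "0 < (\<Sum>k\<in>UNIV. q $ k * y $ k)"
  proof (rule sum_pos2[of UNIV i])
    show "0 < q $ i * y $ i" using assms(1)[of i] assms(2) i
      by (simp add: order_le_neq_trans)
    show "\<And>k. k \<in> UNIV \<Longrightarrow> 0 \<le> q $ k * y $ k" using assms(1,2) by (simp add: less_imp_le)
  qed auto
  thus ?thesis by (simp add: inner_vec_def)
qed



lemma budget_nonneg: "y \<in> budget p j \<Longrightarrow> 0 \<le> y $ i"
  unfolding budget_def nonneg_orthant_def by auto

lemma budget_ne0: "y \<in> budget p j \<Longrightarrow> y \<noteq> 0"
  unfolding budget_def by auto

lemma rat_U: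
  fixes p :: "'j::finite \<Rightarrow> real^'k::finite"
  assumes pos: "\<And>j i. p j $ i > 0" and r: "rationalizable p d"
  shows "\<exists>U::'j\<Rightarrow>real. (\<forall>i j. p j \<bullet> d i \<le> 1 \<longrightarrow> U i \<le> U j) \<and> (\<forall>i j. p j \<bullet> d i < 1 \<longrightarrow> U i < U j)"
proof -
  from r obtain u where db: "\<And>j. d j \<in> budget p j" and si: "strictly_increasing u"
    and mx: "\<And>j x. x \<in> budget p j \<Longrightarrow> u x \<le> u (d j)"
    unfolding rationalizable_def by blast
  have key: "u (d i) \<le> u (d j) \<and> (p j \<bullet> d i < 1 \<longrightarrow> u (d i) < u (d j))" if le: "p j \<bullet> d i \<le> 1" for i j
  proof -
    define t where "t = p j \<bullet> d i"
    have nn: "\<forall>k. 0 \<le> d i $ k" using budget_nonneg[OF db] by auto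
    have t0: "t > 0" unfolding t_def by (rule inner_pos[OF pos nn budget_ne0[OF db]])
    define y where "y = (1 / t) *\<^sub>R d i"
    have yb: "y \<in> budget p j"
      using t0 nn unfolding budget_def nonneg_orthant_def y_def t_def by auto
    have uy: "u y \<le> u (d j)" using mx[OF yb] .
    show ?thesis
    proof (cases "t = 1")
      case True
      then have "y = d i" unfolding y_def by simp
      then show ?thesis using uy True t_def by simp
    next
      case False
      then have tl: "t < 1" using le t_def by simp
      have comp: "\<forall>k. d i $ k \<le> y $ k"
      proof
        fix k
        have "1 \<le> 1 / t" using t0 tl by simp
        then have "1 * d i $ k \<le> (1/t) * d i $ k" using nn by (intro mult_right_mono) auto
        then show "d i $ k \<le> y $ k" unfolding y_def by simp
      qed
      have ne: "d i \<noteq> y"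
      proof
        assume "d i = y"
        then have "(1 / t - 1) *\<^sub>R d i = 0" unfolding y_def by (simp add: algebra_simps)
        moreover have "1 / t - 1 \<noteq> 0" using t0 tl by simp
        ultimately show False using budget_ne0[OF db] by simp
      qed
      have ynn: "y \<in> nonneg_orthant" using yb unfolding budget_def by auto
      have dnn: "d i \<in> nonneg_orthant" using nn unfolding nonneg_orthant_def by auto
      have "u (d i) < u y" using si dnn ynn comp ne unfolding strictly_increasing_def by blast
      then show ?thesis using uy tl t_def by simp
    qed
  qed
  show ?thesis by (rule exI[of _ "\<lambda>j. u (d j)"]) (use key in auto)
qed

lemma U_rat:
  fixes p :: "'j::finite \<Rightarrow> real^'k::finite" and U :: "'j \<Rightarrow> real"
  assumes pos: "\<And>j i. p j $ i > 0" and db: "\<And>j. d j \<in> budget p j"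
   and U1: "\<And>i j. p j \<bullet> d i \<le> 1 \<Longrightarrow> U i \<le> U j" and U2: "\<And>i j. p j \<bullet> d i < 1 \<Longrightarrow> U i < U j"
  shows "rationalizable p d"
proof -
  obtain \<delta> :: real where d0: "\<delta> > 0" and dg: "\<And>i j. U i < U j \<Longrightarrow> \<delta> \<le> U j - U i"
  proof -
    define G where "G = insert 1 ((\<lambda>(i,j). U j - U i) ` {(i,j). U i < U j})"
    have fG: "finite G" unfolding G_def by simp
    have "Min G > 0" using fG unfolding G_def by (auto simp: Min_gr_iff)
    moreover have "Min G \<le> U j - U i" if "U i < U j" for i j
      using fG that unfolding G_def by (intro Min_le) auto
    ultimately show ?thesis using that by blast
  qed
  define M where "M = Max ((\<lambda>(i,j). U i - U j) ` UNIV) + 1"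
  have Mg: "U i - U j < M" for i j
  proof -
    have "U i - U j \<le> Max ((\<lambda>(i,j). U i - U j) ` UNIV)" by (rule Max_ge) auto
    then show ?thesis unfolding M_def by simp
  qed
  have M0: "M > 0" using Mg[of undefined undefined] by simp
  define h where "h t = (if t > 0 then M + t else \<delta> * (exp t - 1))" for t :: real
  have hmono: "h t1 < h t2" if lt: "t1 < t2" for t1 t2
  proof (cases "t2 > 0")
    case True
    show ?thesis
    proof (cases "t1 > 0")
      case True then show ?thesis using \<open>t2 > 0\<close> lt unfolding h_def by simp
    next
      case False
      have "exp t1 \<le> 1" using False by simp
      then have "\<delta> * (exp t1 - 1) \<le> 0" using d0 by (simp add: mult_nonneg_nonpos)
      then show ?thesis using False \<open>t2 > 0\<close> M0 unfolding h_def by simp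
    qed
  next
    case False
    then have "\<not> t1 > 0" using lt by simp
    moreover have "exp t1 < exp t2" using lt by simp
    ultimately show ?thesis using False d0 unfolding h_def by simp
  qed
  have h0: "h 0 = 0" unfolding h_def by simp
  have hneg: "h t > - \<delta>" for t
  proof (cases "t > 0")
    case True then show ?thesis using M0 d0 unfolding h_def by simp
  next
    case False
    have "0 < \<delta> * exp t" using d0 by simp
    then show ?thesis using False unfolding h_def by (simp add: algebra_simps)
  qed
  define f where "f j x = U j + h (p j \<bullet> x - 1)" for j x
  define u where "u x = Min (range (\<lambda>j. f j x))" for x :: "real^'k"
  have si: "strictly_increasing u"
    unfolding strictly_increasing_def
  proof (intro allI impI)
    fix x y :: "real^'k" assume a: "x \<in> nonneg_orthant \<and> y \<in> nonneg_orthant \<and> (\<forall>i. x $ i \<le> y $ i) \<and> x \<noteq> y"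
    have fl: "f j x < f j y" for j
    proof -
      have "p j \<bullet> (y - x) > 0"
        by (rule inner_pos[OF pos]) (use a in auto)
      then have "p j \<bullet> x < p j \<bullet> y" by (simp add: inner_diff_right)
      then show ?thesis unfolding f_def by (simp add: hmono)
    qed
    obtain j0 where j0: "u y = f j0 y"
    proof -
      have "Min (range (\<lambda>j. f j y)) \<in> range (\<lambda>j. f j y)" by (rule Min_in) auto
      then obtain j where "Min (range (\<lambda>j. f j y)) = f j y" by blast
      then show ?thesis using that[of j] unfolding u_def by simp
    qed
    have "u x \<le> f j0 x" unfolding u_def by (rule Min_le) auto
    then show "u x < u y" using fl[of j0] j0 by simp
  qed
  have ub: "u x \<le> U j" if "x \<in> budget p j" for x j
  proof -
    have "u x \<le> f j x" unfolding u_def by (rule Min_le) auto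
    then show ?thesis using that h0 unfolding f_def budget_def by simp
  qed
  have ud: "U j \<le> u (d j)" for j
    unfolding u_def
  proof (rule Min.boundedI)
    show "finite (range (\<lambda>i. f i (d j)))" by simp
    show "range (\<lambda>i. f i (d j)) \<noteq> {}" by simp
    show "U j \<le> a" if "a \<in> range (\<lambda>i. f i (d j))" for a
    proof -
      from that obtain i where ai: "a = f i (d j)" by auto
      define t where "t = p i \<bullet> d j - 1"
      have "U j \<le> U i + h t"
      proof (cases "t > 0")
        case True
        then show ?thesis using Mg[of j i] unfolding h_def by simp
      next
        case False
        show ?thesis
        proof (cases "t = 0")
          case True
          then have "U j \<le> U i" using U1[where i=j and j=i] t_def by simp
          then show ?thesis using True h0 by simp
        next
          case False
          then have "t < 0" using \<open>\<not> t > 0\<close> by simp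
          then have "U j < U i" using U2[where i=j and j=i] t_def by simp
          then have "\<delta> \<le> U i - U j" using dg by blast
          then show ?thesis using hneg[of t] by simp
        qed
      qed
      then show "U j \<le> a" using ai t_def unfolding f_def by simp
    qed
  qed
  show ?thesis unfolding rationalizable_def
    using db si ub ud by (meson order_trans)
qed

lemma sgn_le1: "(a::real) \<le> 1 \<longleftrightarrow> sgn (a - 1) \<noteq> 1"
  by (auto simp: sgn_if)

lemma sgn_lt1: "(a::real) < 1 \<longleftrightarrow> sgn (a - 1) = -1"
  by (auto simp: sgn_if)

lemma rat_transfer:
  fixes p :: "'j::finite \<Rightarrow> real^'k::finite"
  assumes pos: "\<And>j i. p j $ i > 0" and r: "rationalizable p d"
    and b': "\<And>j. d' j \<in> budget p j"
    and sv: "\<And>j. sign_vector p (d' j) = sign_vector p (d j)"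
  shows "rationalizable p d'"
proof -
  obtain U :: "'j \<Rightarrow> real" where U1: "\<And>i j. p j \<bullet> d i \<le> 1 \<Longrightarrow> U i \<le> U j"
    and U2: "\<And>i j. p j \<bullet> d i < 1 \<Longrightarrow> U i < U j"
    using rat_U[OF pos r] by blast
  have e: "sgn (p j \<bullet> d' i - 1) = sgn (p j \<bullet> d i - 1)" for i j
    using fun_cong[OF sv[of i], of j] unfolding sign_vector_def by simp
  show ?thesis
  proof (rule U_rat[OF pos b'])
    show "U i \<le> U j" if "p j \<bullet> d' i \<le> 1" for i j
      using that e[of j i] U1[of j i] by (simp add: sgn_le1)
    show "U i < U j" if "p j \<bullet> d' i < 1" for i j
      using that e[of j i] U2[of j i] by (simp add: sgn_lt1)
  qed
qed



lemma col_basic: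
  assumes "a \<in> rational_demand_columns p ystar"
  shows "(j, selected_patch p a j) \<in> rows p \<and> a (j, selected_patch p a j) = 1"
proof -
  have "\<exists>!x. (j, x) \<in> rows p \<and> a (j, x) = 1" using assms unfolding rational_demand_columns_def by blast
  then show ?thesis unfolding selected_patch_def by (rule theI')
qed

lemma col_val:
  assumes a: "a \<in> rational_demand_columns p ystar"
  shows "a (j,x) = (if (j,x) \<in> rows p \<and> x = selected_patch p a j then 1 else 0)"
proof -
  have v1: "\<forall>r. a r \<in> {0,1}" and v2: "\<forall>r. r \<notin> rows p \<longrightarrow> a r = 0"
    and u: "\<exists>!x. (j, x) \<in> rows p \<and> a (j, x) = 1"
    using a unfolding rational_demand_columns_def by blast+
  have s: "(j, selected_patch p a j) \<in> rows p \<and> a (j, selected_patch p a j) = 1" by (rule col_basic[OF a])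
  show ?thesis
  proof (cases "(j,x) \<in> rows p")
    case False then show ?thesis using v2 by simp
  next
    case True
    show ?thesis
    proof (cases "x = selected_patch p a j")
      case True then show ?thesis using s by simp
    next
      case False
      have "a (j,x) \<noteq> 1" using u s False True by blast
      then show ?thesis using v1 False by auto
    qed
  qed
qed

lemma col_eq:
  assumes "a \<in> rational_demand_columns p ystar" "b \<in> rational_demand_columns p ystar"
    "\<And>j. selected_patch p a j = selected_patch p b j"
  shows "a = b"
proof
  fix r show "a r = b r"
    by (cases r) (simp add: col_val[OF assms(1)] col_val[OF assms(2)] assms(3))
qed

lemma sel_patch:
  assumes "a \<in> rational_demand_columns p ystar"
  shows "selected_patch p a j \<in> patches p" "selected_patch p a j \<subseteq> budget p j"
  using col_basic[OF assms, of j] unfolding rows_def by auto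

lemma col_T_rat:
  fixes p :: "'j::finite \<Rightarrow> real^'k::finite"
  assumes pos: "\<And>j i. p j $ i > 0" and reps: "\<And>x. x \<in> patches p \<Longrightarrow> ystar x \<in> x"
    and a: "a \<in> rational_demand_columns p ystar" and dT: "\<And>j. d j \<in> selected_patch p a j"
  shows "rationalizable p d"
proof (rule rat_transfer[OF pos])
  show "rationalizable p (\<lambda>j. ystar (selected_patch p a j))"
    using a unfolding rational_demand_columns_def by blast
  show "d j \<in> budget p j" for j using sel_patch(2)[OF a] dT by blast
  show "sign_vector p (d j) = sign_vector p (ystar (selected_patch p a j))" for j
    using patch_sv2[OF sel_patch(1)[OF a] reps[OF sel_patch(1)[OF a]] dT] .
qed

definition colof :: "('j \<Rightarrow> real^'k) \<Rightarrow> ('j \<Rightarrow> real^'k) \<Rightarrow> ('j \<times> (real^'k) set \<Rightarrow> real)" where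
  "colof p d = (\<lambda>(j,x). if (j,x) \<in> rows p \<and> x = pat p (d j) then 1 else 0)"

lemma budget_in_union: "y \<in> budget p j \<Longrightarrow> y \<in> budget_union p"
  unfolding budget_union_def by auto

lemma colof_sel:
  assumes db: "\<And>j. d j \<in> budget p j"
  shows "selected_patch p (colof p d) j = pat p (d j)"
  unfolding selected_patch_def
proof (rule the_equality)
  show "(j, pat p (d j)) \<in> rows p \<and> colof p d (j, pat p (d j)) = 1"
    using rows_pat[OF db] unfolding colof_def by simp
  show "x = pat p (d j)" if "(j, x) \<in> rows p \<and> colof p d (j, x) = 1" for x
    using that unfolding colof_def by (auto split: if_splits)
qed

lemma colof_in:
  fixes p :: "'j::finite \<Rightarrow> real^'k::finite"
  assumes pos: "\<And>j i. p j $ i > 0" and reps: "\<And>x. x \<in> patches p \<Longrightarrow> ystar x \<in> x"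
    and r: "rationalizable p d"
  shows "colof p d \<in> rational_demand_columns p ystar"
proof -
  have db: "\<And>j. d j \<in> budget p j" using r unfolding rationalizable_def by blast
  have ex: "\<exists>!x. (j, x) \<in> rows p \<and> colof p d (j, x) = 1" for j
  proof
    show "(j, pat p (d j)) \<in> rows p \<and> colof p d (j, pat p (d j)) = 1"
      using rows_pat[OF db] unfolding colof_def by simp
    show "x = pat p (d j)" if "(j, x) \<in> rows p \<and> colof p d (j, x) = 1" for x
      using that unfolding colof_def by (auto split: if_splits)
  qed
  have rr: "rationalizable p (\<lambda>j. ystar (pat p (d j)))"
  proof (rule rat_transfer[OF pos r])
    fix j
    have pp: "pat p (d j) \<in> patches p" using pat_patch[OF budget_in_union[OF db]] .
    have ym: "ystar (pat p (d j)) \<in> pat p (d j)" using reps[OF pp] .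
    show "ystar (pat p (d j)) \<in> budget p j"
      using patch_budget[OF pp pat_self[OF budget_in_union[OF db]] db] ym by blast
    show "sign_vector p (ystar (pat p (d j))) = sign_vector p (d j)"
      using ym unfolding pat_def by simp
  qed
  show ?thesis unfolding rational_demand_columns_def
    using ex rr colof_sel[OF db] unfolding colof_def by auto
qed

lemma T_unique:
  fixes p :: "'j::finite \<Rightarrow> real^'k::finite"
  assumes pos: "\<And>j i. p j $ i > 0" and reps: "\<And>x. x \<in> patches p \<Longrightarrow> ystar x \<in> x"
    and a: "a \<in> rational_demand_columns p ystar" and dT: "\<And>j. d j \<in> selected_patch p a j"
  shows "a = colof p d"
proof -
  have r: "rationalizable p d" by (rule col_T_rat[OF pos reps a dT])
  have db: "\<And>j. d j \<in> budget p j" using r unfolding rationalizable_def by blast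
  show ?thesis
  proof (rule col_eq[OF a colof_in[OF pos reps r]])
    fix j show "selected_patch p a j = selected_patch p (colof p d) j"
      using patch_eq[OF sel_patch(1)[OF a] dT] colof_sel[OF db] by simp
  qed
qed



lemma pat_alt: "pat p y = {z. (\<forall>i. 0 \<le> z $ i) \<and> (\<exists>j. p j \<bullet> z = 1) \<and> (\<forall>j. sgn (p j \<bullet> z - 1) = sign_vector p y j)}"
  unfolding pat_def budget_union_def budget_def nonneg_orthant_def sign_vector_def by (auto simp: fun_eq_iff)

lemma patch_borel:
  fixes p :: "'j::finite \<Rightarrow> real^'k::finite"
  assumes "x \<in> patches p" shows "x \<in> sets borel"
proof -
  obtain y where x: "x = pat p y" using assms unfolding patches_pat by auto
  have "{z. (\<forall>i. 0 \<le> z $ i) \<and> (\<exists>j. p j \<bullet> z = 1) \<and> (\<forall>j. sgn (p j \<bullet> z - 1) = sign_vector p y j)} \<in> sets borel"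
    by measurable
  then show ?thesis unfolding x pat_alt .
qed



definition Tset :: "('j \<Rightarrow> real^'k) \<Rightarrow> ('j \<times> (real^'k) set \<Rightarrow> real) \<Rightarrow> ('j \<Rightarrow> real^'k) set" where
  "Tset p a = PiE UNIV (selected_patch p a)"

lemma Tset_iff: "d \<in> Tset p a \<longleftrightarrow> (\<forall>j. d j \<in> selected_patch p a j)"
  unfolding Tset_def by (auto simp: PiE_iff)

lemma Tset_sets:
  fixes p :: "'j::finite \<Rightarrow> real^'k::finite"
  assumes "a \<in> rational_demand_columns p ystar"
  shows "Tset p a \<in> sets (PiM UNIV (\<lambda>_. borel))"
  unfolding Tset_def by (rule sets_PiM_I_finite) (auto intro: patch_borel sel_patch[OF assms])

lemma finite_cols:
  fixes p :: "'j::finite \<Rightarrow> real^'k::finite"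
  shows "finite (rational_demand_columns p ystar)"
proof (rule inj_on_finite[of "selected_patch p"])
  show "inj_on (selected_patch p) (rational_demand_columns p ystar)"
    by (rule inj_onI) (rule col_eq, auto)
  show "selected_patch p ` rational_demand_columns p ystar \<subseteq> PiE UNIV (\<lambda>_. patches p)"
  proof
    fix f assume "f \<in> selected_patch p ` rational_demand_columns p ystar"
    then obtain a where a: "a \<in> rational_demand_columns p ystar" and f: "f = selected_patch p a" by blast
    show "f \<in> PiE UNIV (\<lambda>_. patches p)" unfolding f PiE_iff using sel_patch(1)[OF a] by simp
  qed
  show "finite (PiE (UNIV::'j set) (\<lambda>_. patches p))" by (rule finite_PiE) (simp_all add: finite_patches)
qed

lemma sum_Tset:
  fixes p :: "'j::finite \<Rightarrow> real^'k::finite"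
  assumes pos: "\<And>j i. p j $ i > 0" and reps: "\<And>x. x \<in> patches p \<Longrightarrow> ystar x \<in> x"
    and r: "rationalizable p d"
  shows "(\<Sum>a\<in>rational_demand_columns p ystar. g a * indicator (Tset p a) d) = (g (colof p d) :: real)"
proof -
  have db: "\<And>j. d j \<in> budget p j" using r unfolding rationalizable_def by blast
  have "indicator (Tset p a) d = (if a = colof p d then 1 else (0::real))"
    if a: "a \<in> rational_demand_columns p ystar" for a
  proof (cases "d \<in> Tset p a")
    case True
    then have "a = colof p d" using T_unique[OF pos reps a] by (simp add: Tset_iff)
    then show ?thesis using True by simp
  next
    case False
    have "d \<in> Tset p (colof p d)"
      unfolding Tset_iff colof_sel[OF db] using pat_self[OF budget_in_union[OF db]] by simp
    then show ?thesis using False by auto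
  qed
  then have "(\<Sum>a\<in>rational_demand_columns p ystar. g a * indicator (Tset p a) d)
     = (\<Sum>a\<in>rational_demand_columns p ystar. if a = colof p d then g a else 0)"
    by (intro sum.cong) auto
  also have "\<dots> = g (colof p d)"
    using sum.delta[OF finite_cols, of "colof p d" g] colof_in[OF pos reps r] by simp
  finally show ?thesis .
qed

lemma colof_val:
  assumes db: "\<And>j. d j \<in> budget p j" and jx: "(j,x) \<in> rows p"
  shows "colof p d (j,x) = indicator {d. d j \<in> x} d"
proof -
  have xp: "x \<in> patches p" using jx unfolding rows_def by auto
  have "d j \<in> x \<longleftrightarrow> x = pat p (d j)"
    using patch_eq[OF xp] pat_self[OF budget_in_union[OF db]] by blast
  then show ?thesis using jx unfolding colof_def by (simp add: indicator_def)
qed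



lemma space_Pi_borel: "space (PiM (UNIV::'j set) (\<lambda>_. (borel :: ('a::topological_space) measure))) = UNIV"
  by (simp add: space_PiM)

lemma SR_imp:
  fixes p :: "'j::finite \<Rightarrow> real^'k::finite"
    and P :: "'j \<Rightarrow> (real^'k) measure"
  assumes pos: "\<And>j i. p j $ i > 0" and sds: "stochastic_demand_system p P"
    and reps: "\<And>x. x \<in> patches p \<Longrightarrow> ystar x \<in> x"
    and SR: "stochastically_rationalizable p P"
  shows "\<exists>\<nu>. (\<forall>a\<in>rational_demand_columns p ystar. \<nu> a \<ge> 0) \<and>
                 (\<Sum>a\<in>rational_demand_columns p ystar. \<nu> a) = 1 \<and>
                 vector_rep p P = mat_vec p ystar \<nu>"
proof -
  let ?C = "rational_demand_columns p ystar"
  obtain Q :: "('j \<Rightarrow> real^'k) measure" where pQ: "prob_space Q"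
    and sQ: "sets Q = sets (PiM UNIV (\<lambda>_. borel))" and ae: "AE d in Q. rationalizable p d"
    and mg: "\<And>j. distr Q borel (\<lambda>d. d j) = P j"
    using SR unfolding stochastically_rationalizable_def by blast
  interpret Q: prob_space Q by (rule pQ)
  have spQ: "space Q = UNIV" using sets_eq_imp_space_eq[OF sQ] space_Pi_borel by simp
  have TQ: "Tset p a \<in> sets Q" if "a \<in> ?C" for a using Tset_sets[OF that] sQ by simp
  have intT: "integrable Q (indicator (Tset p a) :: _ \<Rightarrow> real)" if "a \<in> ?C" for a
    by (rule integrable_real_indicator[OF TQ[OF that]]) (simp add: Q.emeasure_eq_measure)
  define \<nu> where "\<nu> a = measure Q (Tset p a)" for a
  have intnu: "integral\<^sup>L Q (indicator (Tset p a)) = \<nu> a" for a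
    unfolding \<nu>_def integral_indicator by (simp add: spQ)
  have compm: "(\<lambda>d. d j) \<in> measurable Q borel" for j
  proof -
    have "(\<lambda>d. d j) \<in> measurable (PiM UNIV (\<lambda>_. borel)) borel"
      using measurable_component_singleton[of j UNIV "\<lambda>_. borel"] by simp
    then show ?thesis using measurable_cong_sets[OF sQ refl] by blast
  qed
  have measC: "(\<lambda>d. \<Sum>a\<in>?C. c a * indicator (Tset p a) d) \<in> borel_measurable Q" for c :: "_ \<Rightarrow> real"
  proof (rule borel_measurable_sum)
    fix a assume "a \<in> ?C"
    then show "(\<lambda>d. c a * indicator (Tset p a) d) \<in> borel_measurable Q"
      using TQ by measurable
  qed
  have intsum: "integral\<^sup>L Q (\<lambda>d. \<Sum>a\<in>?C. c a * indicator (Tset p a) d) = (\<Sum>a\<in>?C. c a * \<nu> a)" for c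
  proof -
    have "integral\<^sup>L Q (\<lambda>d. \<Sum>a\<in>?C. c a * indicator (Tset p a) d) = (\<Sum>a\<in>?C. integral\<^sup>L Q (\<lambda>d. c a * indicator (Tset p a) d))"
      by (rule Bochner_Integration.integral_sum) (use intT in auto)
    also have "\<dots> = (\<Sum>a\<in>?C. c a * \<nu> a)"
      by (intro sum.cong refl) (simp add: \<nu>_def spQ)
    finally show ?thesis .
  qed
  have nu_nn: "\<forall>a\<in>?C. \<nu> a \<ge> 0" unfolding \<nu>_def by simp
  have sum1: "(\<Sum>a\<in>?C. \<nu> a) = 1"
  proof -
    have "AE d in Q. (1::real) = (\<Sum>a\<in>?C. 1 * indicator (Tset p a) d)"
      using ae
    proof eventually_elim
      case (elim d)
      show ?case using sum_Tset[OF pos reps elim, of "\<lambda>_. 1"] by simp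
    qed
    then have "integral\<^sup>L Q (\<lambda>_. 1::real) = integral\<^sup>L Q (\<lambda>d. \<Sum>a\<in>?C. 1 * indicator (Tset p a) d)"
      by (rule integral_cong_AE[OF borel_measurable_const measC])
    then show ?thesis using intsum[of "\<lambda>_. 1"] Q.prob_space by simp
  qed
  have vr: "vector_rep p P = mat_vec p ystar \<nu>"
  proof
    fix r show "vector_rep p P r = mat_vec p ystar \<nu> r"
    proof (cases r)
      case (Pair j x)
      show ?thesis
      proof (cases "(j,x) \<in> rows p")
        case False
        have "a r = 0" if "a \<in> ?C" for a using that False Pair unfolding rational_demand_columns_def by auto
        then show ?thesis using False Pair unfolding vector_rep_def mat_vec_def by (simp add: sum.neutral)
      next
        case True
        have xb: "x \<in> sets borel" using True patch_borel unfolding rows_def by auto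
        have "measure (P j) x = measure (distr Q borel (\<lambda>d. d j)) x" using mg by simp
        also have "\<dots> = measure Q ((\<lambda>d. d j) -` x \<inter> space Q)" by (rule measure_distr[OF compm xb])
        also have "\<dots> = integral\<^sup>L Q (indicator {d. d j \<in> x})" unfolding integral_indicator
          by (simp add: vimage_def spQ)
        also have "\<dots> = integral\<^sup>L Q (\<lambda>d. \<Sum>a\<in>?C. a (j,x) * indicator (Tset p a) d)"
        proof (rule integral_cong_AE)
          have "{d. d j \<in> x} \<in> sets Q" using measurable_sets[OF compm xb] spQ by (simp add: vimage_def)
          then show "indicator {d. d j \<in> x} \<in> borel_measurable Q" by simp
          show "(\<lambda>d. \<Sum>a\<in>?C. a (j,x) * indicator (Tset p a) d) \<in> borel_measurable Q" by (rule measC)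
          show "AE d in Q. indicator {d. d j \<in> x} d = (\<Sum>a\<in>?C. a (j,x) * indicator (Tset p a) d)"
            using ae
          proof eventually_elim
            case (elim d)
            have db: "\<And>j. d j \<in> budget p j" using elim unfolding rationalizable_def by blast
            show ?case using sum_Tset[OF pos reps elim, of "\<lambda>a. a (j,x)"] colof_val[OF db True] by simp
          qed
        qed
        also have "\<dots> = (\<Sum>a\<in>?C. a (j,x) * \<nu> a)" by (rule intsum)
        finally show ?thesis using True Pair unfolding vector_rep_def mat_vec_def by simp
      qed
    qed
  qed
  show ?thesis using nu_nn sum1 vr by blast
qed



lemma E1:
  fixes p :: "'j::finite \<Rightarrow> real^'k::finite"
  assumes eq: "vector_rep p P = mat_vec p ystar \<nu>" and jx: "(j,x) \<in> rows p"
  shows "(\<Sum>a\<in>{a\<in>rational_demand_columns p ystar. selected_patch p a j = x}. \<nu> a) = measure (P j) x"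
proof -
  have "measure (P j) x = (\<Sum>a\<in>rational_demand_columns p ystar. a (j,x) * \<nu> a)"
    using fun_cong[OF eq, of "(j,x)"] jx unfolding vector_rep_def mat_vec_def by simp
  also have "\<dots> = (\<Sum>a\<in>rational_demand_columns p ystar. if selected_patch p a j = x then \<nu> a else 0)"
    by (intro sum.cong refl) (auto simp: col_val jx)
  also have "\<dots> = (\<Sum>a\<in>{a\<in>rational_demand_columns p ystar. selected_patch p a j = x}. \<nu> a)"
    by (rule sum.inter_filter[OF finite_cols, symmetric])
  finally show ?thesis by simp
qed

lemma E2:
  fixes p :: "'j::finite \<Rightarrow> real^'k::finite"
  assumes eq: "vector_rep p P = mat_vec p ystar \<nu>"
    and nn: "\<forall>a\<in>rational_demand_columns p ystar. \<nu> a \<ge> 0"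
    and a: "a \<in> rational_demand_columns p ystar"
  shows "\<nu> a \<le> measure (P k) (selected_patch p a k)"
proof -
  let ?S = "{b\<in>rational_demand_columns p ystar. selected_patch p b k = selected_patch p a k}"
  have "\<nu> a \<le> (\<Sum>b\<in>?S. \<nu> b)"
  proof (rule member_le_sum)
    show "finite ?S" using finite_cols[of p ystar] by simp
  qed (use a nn in auto)
  also have "\<dots> = measure (P k) (selected_patch p a k)"
    by (rule E1[OF eq]) (use col_basic[OF a] in blast)
  finally show ?thesis .
qed

definition cw :: "('j::finite \<Rightarrow> real^'k) \<Rightarrow> ('j \<Rightarrow> (real^'k) measure) \<Rightarrow> (('j \<times> (real^'k) set \<Rightarrow> real) \<Rightarrow> real) \<Rightarrow> ('j \<times> (real^'k) set \<Rightarrow> real) \<Rightarrow> real" where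
  "cw p P \<nu> a = \<nu> a / (\<Prod>k\<in>UNIV. measure (P k) (selected_patch p a k))"

lemma per_a:
  fixes p :: "'j::finite \<Rightarrow> real^'k::finite"
  assumes eq: "vector_rep p P = mat_vec p ystar \<nu>"
    and nn: "\<forall>a\<in>rational_demand_columns p ystar. \<nu> a \<ge> 0"
    and a: "a \<in> rational_demand_columns p ystar"
  shows "cw p P \<nu> a * (\<Prod>k\<in>UNIV. measure (P k) (if k = j then selected_patch p a j \<inter> A else selected_patch p a k))
       = \<nu> a * measure (P j) (selected_patch p a j \<inter> A) / measure (P j) (selected_patch p a j)"
proof -
  define R where "R = (\<Prod>k\<in>UNIV - {j}. measure (P k) (selected_patch p a k))"
  have p1: "(\<Prod>k\<in>UNIV. measure (P k) (if k = j then selected_patch p a j \<inter> A else selected_patch p a k))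
      = measure (P j) (selected_patch p a j \<inter> A) * R"
    unfolding R_def by (subst prod.remove[of UNIV j]) (auto intro!: prod.cong)
  have p2: "(\<Prod>k\<in>UNIV. measure (P k) (selected_patch p a k)) = measure (P j) (selected_patch p a j) * R"
    unfolding R_def by (subst prod.remove[of UNIV j]) auto
  show ?thesis
  proof (cases "\<nu> a = 0")
    case True then show ?thesis unfolding cw_def by simp
  next
    case False
    then have vpos: "\<nu> a > 0" using nn a by force
    have mpos: "measure (P k) (selected_patch p a k) > 0" for k
      using E2[OF eq nn a, of k] vpos by simp
    have Rpos: "R > 0" unfolding R_def by (rule prod_pos) (use mpos in auto)
    show ?thesis unfolding cw_def p1 p2 using Rpos mpos[of j] by (simp add: field_simps)
  qed
qed

lemma budget_X: "budget p j = (\<Union>x\<in>{x. (j,x) \<in> rows p}. x)"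
proof
  show "budget p j \<subseteq> (\<Union>x\<in>{x. (j,x) \<in> rows p}. x)"
  proof
    fix y assume y: "y \<in> budget p j"
    then have "(j, pat p y) \<in> rows p" "y \<in> pat p y"
      using rows_pat[OF y] pat_self[OF budget_in_union[OF y]] by simp_all
    then show "y \<in> (\<Union>x\<in>{x. (j,x) \<in> rows p}. x)" by blast
  qed
  show "(\<Union>x\<in>{x. (j,x) \<in> rows p}. x) \<subseteq> budget p j" unfolding rows_def by auto
qed

lemma marg_real:
  fixes p :: "'j::finite \<Rightarrow> real^'k::finite"
  assumes sds: "stochastic_demand_system p P"
    and eq: "vector_rep p P = mat_vec p ystar \<nu>"
    and nn: "\<forall>a\<in>rational_demand_columns p ystar. \<nu> a \<ge> 0"
    and A: "A \<in> sets borel"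
  shows "(\<Sum>a\<in>rational_demand_columns p ystar. cw p P \<nu> a *
           (\<Prod>k\<in>UNIV. measure (P k) (if k = j then selected_patch p a j \<inter> A else selected_patch p a k)))
         = measure (P j) A"
proof -
  let ?C = "rational_demand_columns p ystar"
  let ?X = "{x. (j,x) \<in> rows p}"
  have pP: "prob_space (P j)" and sP: "sets (P j) = sets borel" and bP: "emeasure (P j) (budget p j) = 1"
    using sds unfolding stochastic_demand_system_def by auto
  interpret PJ: prob_space "P j" by (rule pP)
  have finX: "finite ?X"
    by (rule finite_subset[OF _ finite_patches[of p]]) (auto simp: rows_def)
  have Xb: "x \<in> sets (P j)" if "x \<in> ?X" for x using that patch_borel sP unfolding rows_def by auto
  have AP: "A \<in> sets (P j)" using A sP by simp
  define h where "h a = \<nu> a * measure (P j) (selected_patch p a j \<inter> A) / measure (P j) (selected_patch p a j)" for a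
  have "(\<Sum>a\<in>?C. cw p P \<nu> a *
           (\<Prod>k\<in>UNIV. measure (P k) (if k = j then selected_patch p a j \<inter> A else selected_patch p a k)))
        = (\<Sum>a\<in>?C. h a)"
    unfolding h_def by (intro sum.cong refl per_a[OF eq nn])
  also have "\<dots> = (\<Sum>x\<in>?X. \<Sum>a\<in>{a\<in>?C. selected_patch p a j = x}. h a)"
  proof (rule sum.group[symmetric])
    show "finite ?C" by (rule finite_cols)
    show "finite ?X" by (rule finX)
    show "(\<lambda>a. selected_patch p a j) ` ?C \<subseteq> ?X"
    proof (rule image_subsetI)
      fix a assume "a \<in> ?C"
      then show "selected_patch p a j \<in> ?X" using col_basic[OF \<open>a \<in> ?C\<close>, of j] by simp
    qed
  qed
  also have "\<dots> = (\<Sum>x\<in>?X. measure (P j) (x \<inter> A))"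
  proof (rule sum.cong[OF refl])
    fix x assume x: "x \<in> ?X"
    have "(\<Sum>a\<in>{a\<in>?C. selected_patch p a j = x}. h a)
        = (\<Sum>a\<in>{a\<in>?C. selected_patch p a j = x}. \<nu> a * (measure (P j) (x \<inter> A) / measure (P j) x))"
      unfolding h_def by (intro sum.cong refl) simp
    also have "\<dots> = (\<Sum>a\<in>{a\<in>?C. selected_patch p a j = x}. \<nu> a) * (measure (P j) (x \<inter> A) / measure (P j) x)"
      by (rule sum_distrib_right[symmetric])
    also have "\<dots> = measure (P j) x * (measure (P j) (x \<inter> A) / measure (P j) x)"
      using E1[OF eq] x by simp
    also have "\<dots> = measure (P j) (x \<inter> A)"
    proof (cases "measure (P j) x = 0")
      case True
      have "measure (P j) (x \<inter> A) \<le> measure (P j) x"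
        by (rule PJ.finite_measure_mono) (use Xb[OF x] in auto)
      then show ?thesis using True measure_nonneg[of "P j" "x \<inter> A"] by simp
    next
      case False then show ?thesis by simp
    qed
    finally show "(\<Sum>a\<in>{a\<in>?C. selected_patch p a j = x}. h a) = measure (P j) (x \<inter> A)" .
  qed
  also have "\<dots> = measure (P j) (\<Union>x\<in>?X. x \<inter> A)"
  proof (rule PJ.finite_measure_finite_Union[symmetric])
    show "finite ?X" by (rule finX)
    show "(\<lambda>x. x \<inter> A) ` ?X \<subseteq> sets (P j)" using Xb AP by auto
    show "disjoint_family_on (\<lambda>x. x \<inter> A) ?X"
      unfolding disjoint_family_on_def
    proof (intro ballI impI)
      fix x y assume x: "x \<in> ?X" and y: "y \<in> ?X" and ne: "x \<noteq> y"
      have xp: "x \<in> patches p" and yp: "y \<in> patches p" using x y unfolding rows_def by auto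
      show "x \<inter> A \<inter> (y \<inter> A) = {}" using patch_disj[OF xp yp] ne by blast
    qed
  qed
  also have "(\<Union>x\<in>?X. x \<inter> A) = budget p j \<inter> A" using budget_X[of p j] by blast
  also have "measure (P j) (budget p j \<inter> A) = measure (P j) A"
  proof (rule measure_eq_AE)
    have Bs: "budget p j \<in> sets (P j)" unfolding budget_X[of p j]
      by (rule sets.finite_UN) (use finX Xb in auto)
    have "measure (P j) (budget p j) = 1" using bP PJ.emeasure_eq_measure by simp
    then have "AE y in P j. y \<in> budget p j" by (rule PJ.AE_prob_1)
    then show "AE y in P j. (y \<in> budget p j \<inter> A) = (y \<in> A)" by eventually_elim auto
    show "budget p j \<inter> A \<in> sets (P j)" using Bs AP by auto
    show "A \<in> sets (P j)" by (rule AP)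
  qed
  finally show ?thesis .
qed



lemma imp_SR:
  fixes p :: "'j::finite \<Rightarrow> real^'k::finite"
    and P :: "'j \<Rightarrow> (real^'k) measure"
  assumes pos: "\<And>j i. p j $ i > 0" and sds: "stochastic_demand_system p P"
    and reps: "\<And>x. x \<in> patches p \<Longrightarrow> ystar x \<in> x"
    and nn: "\<forall>a\<in>rational_demand_columns p ystar. \<nu> a \<ge> 0"
    and eq: "vector_rep p P = mat_vec p ystar \<nu>"
  shows "stochastically_rationalizable p P"
proof -
  let ?C = "rational_demand_columns p ystar"
  have pP: "\<And>j. prob_space (P j)" and sP: "\<And>j. sets (P j) = sets borel"
    using sds unfolding stochastic_demand_system_def by auto
  have fP: "finite_measure (P k)" for k using pP[of k] unfolding prob_space_def by simp
  have spP: "\<And>j. space (P j) = UNIV" using sets_eq_imp_space_eq[OF sP] by simp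
  have PPs: "product_sigma_finite P"
    by (simp add: product_sigma_finite_def prob_space_imp_sigma_finite pP)
  define M where "M = PiM UNIV P"
  have sM: "sets M = sets (PiM UNIV (\<lambda>_. borel))" unfolding M_def
    by (rule sets_PiM_cong) (simp_all add: sP)
  have spM: "space M = UNIV" using sets_eq_imp_space_eq[OF sM] space_Pi_borel by simp
  have TM: "Tset p a \<in> sets M" if "a \<in> ?C" for a using Tset_sets[OF that] sM by simp
  define f where "f d = (\<Sum>a\<in>?C. ennreal (cw p P \<nu> a) * indicator (Tset p a) d)" for d
  have fm: "f \<in> borel_measurable M" unfolding f_def
  proof (rule borel_measurable_sum)
    fix a assume "a \<in> ?C"
    then show "(\<lambda>d. ennreal (cw p P \<nu> a) * indicator (Tset p a) d) \<in> borel_measurable M"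
      using TM by measurable
  qed
  define Q where "Q = density M f"
  have sQ: "sets Q = sets (PiM UNIV (\<lambda>_. borel))" unfolding Q_def using sM by simp
  have spQ: "space Q = UNIV" unfolding Q_def using spM by simp
  have cw_nn: "cw p P \<nu> a \<ge> 0" if "a \<in> ?C" for a
    unfolding cw_def using nn that by (simp add: prod_nonneg)
  have key: "emeasure Q {d. d j \<in> A} = ennreal (measure (P j) A)" if A: "A \<in> sets borel" for j A
  proof -
    have compM: "(\<lambda>d. d j) \<in> measurable M (P j)" unfolding M_def
      by (rule measurable_component_singleton) simp
    have Sj: "{d. d j \<in> A} \<in> sets M"
      using measurable_sets[OF compM, of A] sP A spM by (simp add: vimage_def)
    define B where "B a k = (if k = j then selected_patch p a j \<inter> A else selected_patch p a k)" for a k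
    have TB: "Tset p a \<inter> {d. d j \<in> A} = PiE UNIV (B a)" for a
    proof
      show "Tset p a \<inter> {d. d j \<in> A} \<subseteq> PiE UNIV (B a)" unfolding Tset_def B_def by (auto simp: PiE_iff)
      show "PiE UNIV (B a) \<subseteq> Tset p a \<inter> {d. d j \<in> A}"
      proof
        fix d assume "d \<in> PiE UNIV (B a)"
        then have d: "\<And>k. d k \<in> B a k" by (auto simp: PiE_iff)
        have "d k \<in> selected_patch p a k" for k using d[of k] unfolding B_def by (auto split: if_splits)
        moreover have "d j \<in> A" using d[of j] unfolding B_def by simp
        ultimately show "d \<in> Tset p a \<inter> {d. d j \<in> A}" by (simp add: Tset_iff)
      qed
    qed
    have Bs: "B a k \<in> sets (P k)" if "a \<in> ?C" for a k
      using sel_patch(1)[OF that, of k] patch_borel sP A unfolding B_def by auto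
    have emB: "emeasure M (PiE UNIV (B a)) = ennreal (\<Prod>k\<in>UNIV. measure (P k) (B a k))"
      if a: "a \<in> ?C" for a
    proof -
      have "emeasure M (PiE UNIV (B a)) = (\<Prod>k\<in>UNIV. emeasure (P k) (B a k))"
        unfolding M_def by (rule product_sigma_finite.emeasure_PiM[OF PPs]) (simp_all add: Bs[OF a])
      also have "\<dots> = (\<Prod>k\<in>UNIV. ennreal (measure (P k) (B a k)))"
        by (intro prod.cong refl) (simp add: finite_measure.emeasure_eq_measure[OF fP])
      also have "\<dots> = ennreal (\<Prod>k\<in>UNIV. measure (P k) (B a k))" by (rule prod_ennreal) simp
      finally show ?thesis .
    qed
    have "emeasure Q {d. d j \<in> A} = (\<integral>\<^sup>+ d. f d * indicator {d. d j \<in> A} d \<partial>M)"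
      unfolding Q_def by (rule emeasure_density[OF fm Sj])
    also have "\<dots> = (\<integral>\<^sup>+ d. (\<Sum>a\<in>?C. ennreal (cw p P \<nu> a) * indicator (PiE UNIV (B a)) d) \<partial>M)"
      by (intro nn_integral_cong)
         (simp add: f_def sum_distrib_right TB[symmetric] indicator_inter_arith mult.assoc)
    also have "\<dots> = (\<Sum>a\<in>?C. \<integral>\<^sup>+ d. ennreal (cw p P \<nu> a) * indicator (PiE UNIV (B a)) d \<partial>M)"
    proof (rule nn_integral_sum)
      fix a assume a: "a \<in> ?C"
      have "PiE UNIV (B a) \<in> sets M" unfolding M_def
        by (rule sets_PiM_I_finite) (simp_all add: Bs[OF a])
      then show "(\<lambda>d. ennreal (cw p P \<nu> a) * indicator (PiE UNIV (B a)) d) \<in> borel_measurable M"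
        by measurable
    qed
    also have "\<dots> = (\<Sum>a\<in>?C. ennreal (cw p P \<nu> a) * emeasure M (PiE UNIV (B a)))"
    proof (intro sum.cong refl)
      fix a assume a: "a \<in> ?C"
      have "PiE UNIV (B a) \<in> sets M" unfolding M_def
        by (rule sets_PiM_I_finite) (simp_all add: Bs[OF a])
      then show "(\<integral>\<^sup>+ d. ennreal (cw p P \<nu> a) * indicator (PiE UNIV (B a)) d \<partial>M)
           = ennreal (cw p P \<nu> a) * emeasure M (PiE UNIV (B a))"
        by (rule nn_integral_cmult_indicator)
    qed
    also have "\<dots> = (\<Sum>a\<in>?C. ennreal (cw p P \<nu> a * (\<Prod>k\<in>UNIV. measure (P k) (B a k))))"
      by (intro sum.cong refl) (simp add: emB ennreal_mult cw_nn prod_nonneg)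
    also have "\<dots> = ennreal (\<Sum>a\<in>?C. cw p P \<nu> a * (\<Prod>k\<in>UNIV. measure (P k) (B a k)))"
      by (rule sum_ennreal) (simp add: cw_nn prod_nonneg)
    also have "(\<Sum>a\<in>?C. cw p P \<nu> a * (\<Prod>k\<in>UNIV. measure (P k) (B a k))) = measure (P j) A"
      unfolding B_def by (rule marg_real[OF sds eq nn A])
    finally show ?thesis .
  qed
  have pQ: "prob_space Q"
  proof (rule prob_spaceI)
    have "space Q = {d. d undefined \<in> UNIV}" using spQ by simp
    also have "emeasure Q \<dots> = ennreal (measure (P undefined) UNIV)" by (rule key) simp
    also have "measure (P undefined) UNIV = 1"
      using prob_space.prob_space[OF pP[of undefined]] spP by simp
    finally show "emeasure Q (space Q) = 1" by simp
  qed
  have mg: "distr Q borel (\<lambda>d. d j) = P j" for j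
  proof (rule measure_eqI)
    show "sets (distr Q borel (\<lambda>d. d j)) = sets (P j)" using sP by simp
    fix A assume "A \<in> sets (distr Q borel (\<lambda>d. d j))"
    then have A: "A \<in> sets borel" by simp
    have cQ: "(\<lambda>d. d j) \<in> measurable Q borel"
    proof -
      have "(\<lambda>d. d j) \<in> measurable (PiM UNIV (\<lambda>_. borel)) borel"
        using measurable_component_singleton[of j UNIV "\<lambda>_. borel"] by simp
      then show ?thesis using measurable_cong_sets[OF sQ refl] by blast
    qed
    have "emeasure (distr Q borel (\<lambda>d. d j)) A = emeasure Q ((\<lambda>d. d j) -` A \<inter> space Q)"
      by (rule emeasure_distr[OF cQ A])
    also have "\<dots> = emeasure Q {d. d j \<in> A}" using spQ by (simp add: vimage_def)
    also have "\<dots> = ennreal (measure (P j) A)" by (rule key[OF A])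
    also have "\<dots> = emeasure (P j) A" by (simp add: finite_measure.emeasure_eq_measure[OF fP])
    finally show "emeasure (distr Q borel (\<lambda>d. d j)) A = emeasure (P j) A" .
  qed
  have ae: "AE d in Q. rationalizable p d"
    unfolding Q_def AE_density[OF fm]
  proof (rule AE_I2, rule impI)
    fix d assume "0 < f d"
    then have "\<exists>a\<in>?C. ennreal (cw p P \<nu> a) * indicator (Tset p a) d \<noteq> 0"
    proof (rule contrapos_pp)
      assume "\<not> (\<exists>a\<in>?C. ennreal (cw p P \<nu> a) * indicator (Tset p a) d \<noteq> 0)"
      then have "f d = 0" unfolding f_def by (intro sum.neutral) blast
      then show "\<not> 0 < f d" by simp
    qed
    then obtain a where a: "a \<in> ?C" and "indicator (Tset p a) d \<noteq> (0::ennreal)" by auto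
    then have "d \<in> Tset p a" by (auto simp: indicator_def split: if_splits)
    then show "rationalizable p d" using col_T_rat[OF pos reps a] by (simp add: Tset_iff)
  qed
  show ?thesis unfolding stochastically_rationalizable_def
    by (rule exI[of _ Q]) (use pQ sQ ae mg in simp)
qed


theorem proposition2:
  fixes p :: "'j::finite \<Rightarrow> real^'k::finite"
    and P :: "'j \<Rightarrow> (real^'k) measure"
    and ystar :: "(real^'k) set \<Rightarrow> real^'k"
  assumes prices_pos: "\<And>j i. p j $ i > 0"
    and sds: "stochastic_demand_system p P"
    and reps: "\<And>x. x \<in> patches p \<Longrightarrow> ystar x \<in> x"
  shows "(stochastically_rationalizable p P \<longleftrightarrow>
            (\<exists>\<nu>. (\<forall>a\<in>rational_demand_columns p ystar. \<nu> a \<ge> 0) \<and>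
                 (\<Sum>a\<in>rational_demand_columns p ystar. \<nu> a) = 1 \<and>
                 vector_rep p P = mat_vec p ystar \<nu>))
       \<and> (stochastically_rationalizable p P \<longleftrightarrow>
            (\<exists>\<nu>. (\<forall>a\<in>rational_demand_columns p ystar. \<nu> a \<ge> 0) \<and>
                 vector_rep p P = mat_vec p ystar \<nu>))"
proof (intro conjI iffI)
  assume "stochastically_rationalizable p P"
  then show "\<exists>\<nu>. (\<forall>a\<in>rational_demand_columns p ystar. \<nu> a \<ge> 0) \<and>
                 (\<Sum>a\<in>rational_demand_columns p ystar. \<nu> a) = 1 \<and>
                 vector_rep p P = mat_vec p ystar \<nu>"
    using SR_imp[OF prices_pos sds reps] by blast
next
  assume "\<exists>\<nu>. (\<forall>a\<in>rational_demand_columns p ystar. \<nu> a \<ge> 0) \<and>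
                 (\<Sum>a\<in>rational_demand_columns p ystar. \<nu> a) = 1 \<and>
                 vector_rep p P = mat_vec p ystar \<nu>"
  then obtain \<nu> where "\<forall>a\<in>rational_demand_columns p ystar. \<nu> a \<ge> 0"
      "vector_rep p P = mat_vec p ystar \<nu>" by blast
  then show "stochastically_rationalizable p P" using imp_SR[OF prices_pos sds reps] by blast
next
  assume "stochastically_rationalizable p P"
  then obtain \<nu> where "\<forall>a\<in>rational_demand_columns p ystar. \<nu> a \<ge> 0"
      "vector_rep p P = mat_vec p ystar \<nu>"
    using SR_imp[OF prices_pos sds reps] by blast
  then show "\<exists>\<nu>. (\<forall>a\<in>rational_demand_columns p ystar. \<nu> a \<ge> 0) \<and>
                 vector_rep p P = mat_vec p ystar \<nu>" by blast
next
  assume "\<exists>\<nu>. (\<forall>a\<in>rational_demand_columns p ystar. \<nu> a \<ge> 0) \<and>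
                 vector_rep p P = mat_vec p ystar \<nu>"
  then obtain \<nu> where "\<forall>a\<in>rational_demand_columns p ystar. \<nu> a \<ge> 0"
      "vector_rep p P = mat_vec p ystar \<nu>" by blast
  then show "stochastically_rationalizable p P" using imp_SR[OF prices_pos sds reps] by blast
qed

end
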